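(* Let $P=(N,L)$ and $P'=(N',L')$ be filtration pairs for an isolated invariant set $S$. Suppose $r,s$ define a standard shift equivalence of lag $m$ from $f_P:N_L\to N_L$ to $f_{P'}:N'_{L'}\to N'_{L'}$ with semi-lags $k$ and $m-k$ respectively, and suppose $r',s'$ define another standard shift equivalence between $f_P$ and $f_{P'}$ with the same semi-lags $k$ and $m-k$. Then $r\circ f_P^m=r'\circ f_P^m$ and $s\circ f_{P'}^m=s'\circ f_{P'}^m$.
   Context: Let $X$ be a locally compact metric space, $U\subset X$ open and $f:U\to X$ continuous. A solution through $x$ is a map $\sigma:\mathbb Z\to U$ with $\sigma(0)=x$ and $f(\sigma(n))=\sigma(n+1)$ for all $n$; for $N\subset U$, $\operatorname{Inv}N$ is the set of $x\in N$ admitting a solution through $x$ with values in $N$. A compact $N\subset U$ is an isolating neighborhood if $\operatorname{Inv}N\subset\operatorname{Int}N$; $S$ is an isolated invariant set if $S=\operatorname{Inv}N$ for some isolating neighborhood $N$. The exit set is $N^-=\{x\in N:f(x)\notin\operatorname{Int}N\}$. A filtration pair for $S$ is a pair of compact sets $L\subset N$ in the interior of the domain of $f$, each the closure of its interior, with (1) $\operatorname{cl}(N\setminus L)$ an isolating neighborhood and $\operatorname{Inv}\operatorname{cl}(N\setminus L)=S$; (2) $L$ a neighborhood of $N^-$ in $N$; (3) $f(L)\cap\operatorname{cl}(N\setminus L)=\emptyset$. For a filtration pair $P=(N,L)$, $N_L=N/L$ with $L$ collapsed to the base point $[L]$ (if $L=\emptyset$, a disjoint point $[L]$ is adjoined),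 $p:N\to N_L$ the quotient map (and similarly $p':N'\to N'_{L'}$), and $f_P:N_L\to N_L$ is $f_P([L])=[L]$, $f_P(p(x))=p(f(x))$ for $x\in N\setminus L$. Continuous base-point preserving maps $r:N_L\to N'_{L'}$, $s:N'_{L'}\to N_L$ define a shift equivalence of lag $m\in\mathbb Z^+$ if $r\circ f_P=f_{P'}\circ r$, $s\circ f_{P'}=f_P\circ s$, $s\circ r=f_P^m$ and $r\circ s=f_{P'}^m$. It is a standard shift equivalence if there is an integer $0\le k\le m$ (the semi-lag of $r$) such that for every $x\in N\setminus L$ either $f^k(x)\in N'\setminus L'$ and $r(x)=p'(f^k(x))$, or $r(x)=[L']$; and analogously, for every $y\in N'\setminus L'$, either $f^{m-k}(y)\in N\setminus L$ and $s(y)=p(f^{m-k}(y))$, or $s(y)=[L]$ (so $s$ has semi-lag $m-k$). Here points of $N\setminus L$ are identified with their images in $N_L$. *)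

theory Defs
  imports "HOL-Analysis.Analysis"
begin

text \<open>Dynamics of a continuous map f : U -> X, X the ambient metric space (a type).
  Only the values of f on U are relevant.\<close>

definition Inv :: "('a \<Rightarrow> 'a) \<Rightarrow> 'a set \<Rightarrow> 'a set" where
  "Inv f N = {x \<in> N. \<exists>\<sigma>::int \<Rightarrow> 'a. \<sigma> 0 = x \<and> (\<forall>n. \<sigma> n \<in> N \<and> f (\<sigma> n) = \<sigma> (n + 1))}"

definition isolating_nbhd :: "('a::topological_space \<Rightarrow> 'a) \<Rightarrow> 'a set \<Rightarrow> 'a set \<Rightarrow> bool" where
  "isolating_nbhd f U N \<longleftrightarrow> compact N \<and> N \<subseteq> U \<and> Inv f N \<subseteq> interior N"

definition isolated_invariant_set :: "('a::topological_space \<Rightarrow> 'a) \<Rightarrow> 'a set \<Rightarrow> 'a set \<Rightarrow> bool" where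
  "isolated_invariant_set f U S \<longleftrightarrow> (\<exists>N. isolating_nbhd f U N \<and> S = Inv f N)"

definition exit_set :: "('a::topological_space \<Rightarrow> 'a) \<Rightarrow> 'a set \<Rightarrow> 'a set" where
  "exit_set f N = {x \<in> N. f x \<notin> interior N}"

definition filtration_pair ::
  "('a::topological_space \<Rightarrow> 'a) \<Rightarrow> 'a set \<Rightarrow> 'a set \<Rightarrow> 'a set \<Rightarrow> 'a set \<Rightarrow> bool" where
  "filtration_pair f U S N L \<longleftrightarrow>
     compact N \<and> compact L \<and> L \<subseteq> N \<and> N \<subseteq> interior U \<and>
     N = closure (interior N) \<and> L = closure (interior L) \<and>
     isolating_nbhd f U (closure (N - L)) \<and> Inv f (closure (N - L)) = S \<and>
     (\<exists>V. open V \<and> exit_set f N \<subseteq> V \<and> V \<inter> N \<subseteq> L) \<and>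
     f ` L \<inter> closure (N - L) = {}"

text \<open>The pointed quotient space N/L: the base point [L] is None, a point
  x of N - L is represented by Some x.  If L is empty, None is an adjoined point.\<close>

definition qspace :: "'a set \<Rightarrow> 'a set \<Rightarrow> 'a option set" where
  "qspace N L = insert None (Some ` (N - L))"

definition qproj :: "'a set \<Rightarrow> 'a \<Rightarrow> 'a option" where
  "qproj L x = (if x \<in> L then None else Some x)"

definition quot_top :: "'a::topological_space set \<Rightarrow> 'a set \<Rightarrow> 'a option topology" where
  "quot_top N L = topology (\<lambda>V. V \<subseteq> qspace N L \<and>
       openin (top_of_set N) {x \<in> N. qproj L x \<in> V})"

lemma istopology_quot_top:
  "istopology (\<lambda>V. V \<subseteq> qspace N L \<and> openin (top_of_set N) {x \<in> N. qproj L x \<in> V})"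
proof -
  have int: "{x \<in> N. qproj L x \<in> S \<inter> T} = {x \<in> N. qproj L x \<in> S} \<inter> {x \<in> N. qproj L x \<in> T}"
    for S T by auto
  have un: "{x \<in> N. qproj L x \<in> \<Union>K} = \<Union>((\<lambda>S. {x \<in> N. qproj L x \<in> S}) ` K)" for K
    by auto
  have A: "openin (top_of_set N) {x \<in> N. qproj L x \<in> S \<inter> T}"
    if "openin (top_of_set N) {x \<in> N. qproj L x \<in> S}"
       "openin (top_of_set N) {x \<in> N. qproj L x \<in> T}" for S T
    unfolding int using that by (rule openin_Int)
  have B: "openin (top_of_set N) {x \<in> N. qproj L x \<in> \<Union>K}"
    if "\<forall>S\<in>K. openin (top_of_set N) {x \<in> N. qproj L x \<in> S}" for K
    unfolding un using that by (intro openin_Union) auto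
  show ?thesis
    unfolding istopology_def
  proof (rule conjI; intro allI impI)
    fix S T assume "S \<subseteq> qspace N L \<and> openin (top_of_set N) {x \<in> N. qproj L x \<in> S}"
      and "T \<subseteq> qspace N L \<and> openin (top_of_set N) {x \<in> N. qproj L x \<in> T}"
    then show "S \<inter> T \<subseteq> qspace N L \<and> openin (top_of_set N) {x \<in> N. qproj L x \<in> S \<inter> T}"
      using A[of S T] by blast
  next
    fix K assume "\<forall>S\<in>K. S \<subseteq> qspace N L \<and> openin (top_of_set N) {x \<in> N. qproj L x \<in> S}"
    then show "\<Union>K \<subseteq> qspace N L \<and> openin (top_of_set N) {x \<in> N. qproj L x \<in> \<Union>K}"
      using B[of K] by blast
  qed
qed

definition fP :: "('a \<Rightarrow> 'a) \<Rightarrow> 'a set \<Rightarrow> 'a option \<Rightarrow> 'a option" where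
  "fP f L z = (case z of None \<Rightarrow> None | Some x \<Rightarrow> qproj L (f x))"

definition iter_defined :: "('a \<Rightarrow> 'a) \<Rightarrow> 'a set \<Rightarrow> nat \<Rightarrow> 'a \<Rightarrow> bool" where
  "iter_defined f U k x \<longleftrightarrow> (\<forall>j<k. (f ^^ j) x \<in> U)"

definition shift_equivalence ::
  "('a::topological_space \<Rightarrow> 'a) \<Rightarrow> 'a set \<Rightarrow> 'a set \<Rightarrow> 'a set \<Rightarrow> 'a set
   \<Rightarrow> ('a option \<Rightarrow> 'a option) \<Rightarrow> ('a option \<Rightarrow> 'a option) \<Rightarrow> nat \<Rightarrow> bool" where
  "shift_equivalence f N L N' L' r s m \<longleftrightarrow>
     continuous_map (quot_top N L) (quot_top N' L') r \<and> r None = None \<and>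
     continuous_map (quot_top N' L') (quot_top N L) s \<and> s None = None \<and>
     (\<forall>z\<in>qspace N L. r (fP f L z) = fP f L' (r z)) \<and>
     (\<forall>z\<in>qspace N' L'. s (fP f L' z) = fP f L (s z)) \<and>
     (\<forall>z\<in>qspace N L. s (r z) = (fP f L ^^ m) z) \<and>
     (\<forall>z\<in>qspace N' L'. r (s z) = (fP f L' ^^ m) z)"

definition standard_shift_equivalence ::
  "('a::topological_space \<Rightarrow> 'a) \<Rightarrow> 'a set \<Rightarrow> 'a set \<Rightarrow> 'a set \<Rightarrow> 'a set \<Rightarrow> 'a set
   \<Rightarrow> ('a option \<Rightarrow> 'a option) \<Rightarrow> ('a option \<Rightarrow> 'a option) \<Rightarrow> nat \<Rightarrow> nat \<Rightarrow> bool" where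
  "standard_shift_equivalence f U N L N' L' r s m k \<longleftrightarrow>
     shift_equivalence f N L N' L' r s m \<and> k \<le> m \<and>
     (\<forall>x\<in>N - L. (iter_defined f U k x \<and> (f ^^ k) x \<in> N' - L' \<and>
                   r (Some x) = qproj L' ((f ^^ k) x)) \<or> r (Some x) = None) \<and>
     (\<forall>y\<in>N' - L'. (iter_defined f U (m - k) y \<and> (f ^^ (m - k)) y \<in> N - L \<and>
                   s (Some y) = qproj L ((f ^^ (m - k)) y)) \<or> s (Some y) = None)"

end

theory Submission
  imports Defs
begin

lemma iter_comm:
  assumes pres: "\<forall>z\<in>Q. F z \<in> Q" and comm: "\<forall>z\<in>Q. r (F z) = G (r z)"
  shows "z \<in> Q \<Longrightarrow> r ((F ^^ n) z) = (G ^^ n) (r z) \<and> (F ^^ n) z \<in> Q"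
proof (induction n)
  case 0 then show ?case by simp
next
  case (Suc n) then show ?case using pres comm by auto
qed

lemma key:
  assumes Q: "Q = insert None (Some ` A)" and FN: "F None = None"
    and pres: "\<forall>z\<in>Q. F z \<in> Q"
    and c1: "\<forall>z\<in>Q. r (F z) = G (r z)" and c2: "\<forall>z\<in>Q. r' (F z) = G (r' z)"
    and sr1: "\<forall>z\<in>Q. s (r z) = (F ^^ m) z" and sr2: "\<forall>z\<in>Q. s' (r' z) = (F ^^ m) z"
    and sN: "s None = None" "s' None = None" and rN: "r None = None" "r' None = None"
    and v1: "\<forall>x\<in>A. r (Some x) = v x \<or> r (Some x) = None"
    and v2: "\<forall>x\<in>A. r' (Some x) = v x \<or> r' (Some x) = None"
  shows "\<forall>z\<in>Q. r ((F ^^ m) z) = r' ((F ^^ m) z)"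
proof
  fix z assume z: "z \<in> Q"
  show "r ((F ^^ m) z) = r' ((F ^^ m) z)"
  proof (cases "(F ^^ m) z = None")
    case True then show ?thesis using rN by simp
  next
    case False
    have FNn: "(F ^^ n) None = None" for n by (induction n) (auto simp: FN)
    then obtain x where x: "z = Some x" "x \<in> A" using z False Q by auto
    have "r z \<noteq> None" using sr1 z False sN by (metis (no_types))
    moreover have "r' z \<noteq> None" using sr2 z False sN by (metis (no_types))
    ultimately have "r z = r' z" using v1 v2 x by metis
    then show ?thesis using iter_comm[OF pres c1 z] iter_comm[OF pres c2 z] by simp
  qed
qed

lemma fP_pres:
  assumes "filtration_pair f U S N L"
  shows "\<forall>z\<in>qspace N L. fP f L z \<in> qspace N L"
proof
  fix z assume z: "z \<in> qspace N L"
  show "fP f L z \<in> qspace N L"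
  proof (cases z)
    case None then show ?thesis by (simp add: fP_def qspace_def)
  next
    case (Some x)
    with z have x: "x \<in> N" "x \<notin> L" by (auto simp: qspace_def)
    obtain V where V: "open V" "exit_set f N \<subseteq> V" "V \<inter> N \<subseteq> L"
      using assms unfolding filtration_pair_def by blast
    have "x \<notin> exit_set f N" using V x by blast
    then have "f x \<in> interior N" using x by (auto simp: exit_set_def)
    then have "f x \<in> N" using interior_subset by blast
    then show ?thesis using Some by (auto simp: fP_def qspace_def qproj_def)
  qed
qed

theorem mainTheorem20:
  fixes f :: "'a::metric_space \<Rightarrow> 'a"
    and U S N L N' L' :: "'a set"
    and r s r' s' :: "'a option \<Rightarrow> 'a option"
    and m k :: nat
  assumes "locally_compact_space (euclidean :: 'a topology)"
    and "open U" and "continuous_on U f"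
    and "isolated_invariant_set f U S"
    and "filtration_pair f U S N L" and "filtration_pair f U S N' L'"
    and "standard_shift_equivalence f U N L N' L' r s m k"
    and "standard_shift_equivalence f U N L N' L' r' s' m k"
  shows "(\<forall>z\<in>qspace N L. r ((fP f L ^^ m) z) = r' ((fP f L ^^ m) z)) \<and>
         (\<forall>z\<in>qspace N' L'. s ((fP f L' ^^ m) z) = s' ((fP f L' ^^ m) z))"
proof
  note A = assms(7)[unfolded standard_shift_equivalence_def shift_equivalence_def]
  note B = assms(8)[unfolded standard_shift_equivalence_def shift_equivalence_def]
  have FN: "fP f L None = None" "fP f L' None = None" by (simp_all add: fP_def)
  show "\<forall>z\<in>qspace N L. r ((fP f L ^^ m) z) = r' ((fP f L ^^ m) z)"
    apply (rule key[where A="N - L" and s=s and s'=s' and G="fP f L'" and v="\<lambda>x. qproj L' ((f ^^ k) x)"])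
    using A B FN fP_pres[OF assms(5)] by (auto simp: qspace_def)
  show "\<forall>z\<in>qspace N' L'. s ((fP f L' ^^ m) z) = s' ((fP f L' ^^ m) z)"
    apply (rule key[where A="N' - L'" and s=r and s'=r' and G="fP f L" and v="\<lambda>x. qproj L ((f ^^ (m - k)) x)"])
    using A B FN fP_pres[OF assms(6)] by (auto simp: qspace_def)
qed

end
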